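(* Let $\Omega$ be a finite set, $\Lambda_0^\omega>0$ for $\omega\in\Omega$, and $\Lambda_m^\omega=m\Lambda_0^\omega$ for $m\in\mathbb{N}$. Fix $\beta>0$ and $\omega^{key}\in\Omega$, and let $n_m=\Lambda_m^{\omega^{key}}+\beta\sqrt{\Lambda_m^{\omega^{key}}}$. Then $\lim_{m\to\infty}\bar\alpha(n_m,\Lambda_m^{\omega^{key}})$ exists and lies in $(0,1)$; for every $\omega$ with $\Lambda_0^\omega>\Lambda_0^{\omega^{key}}$, $\lim_{m\to\infty}\bar\alpha(n_m,\Lambda_m^\omega)=1$; and for every $\omega$ with $\Lambda_0^\omega<\Lambda_0^{\omega^{key}}$, $\lim_{m\to\infty}\bar\alpha(n_m,\Lambda_m^\omega)=0$.
   Context: For $\lambda>0$ and real $n\ge 0$, the continuous Erlang-C function is $\bar\alpha(n,\lambda)=\min\Big\{1,\big[\lambda\int_0^\infty t e^{-\lambda t}(1+t)^{n-1}\,dt\big]^{-1}\Big\}$; for $n\ge\lambda$ the minimum is attained by the second term, for $n<\lambda$ it equals 1, and for integer $n>\lambda$ it equals the Erlang-C probability that an arriving customer waits in an $M/M/n$ queue with arrival rate $\lambda$ and service rate 1. *)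

theory Defs
  imports "HOL-Analysis.Analysis"
begin

definition alpha_bar :: "real \<Rightarrow> real \<Rightarrow> real" where
  "alpha_bar n lam =
     min 1 (inverse (lam * integral {0..} (\<lambda>t. t * exp (- lam * t) * (1 + t) powr (n - 1))))"

end

theory Submission imports Defs "HOL-Real_Asymp.Real_Asymp" begin

lemma ln_concave_bound:
  fixes y y0 :: real
  assumes "y > 0" "y0 > 0"
  shows "ln y \<le> ln y0 + (y - y0) / y0"
proof -
  have "ln (y / y0) \<le> y / y0 - 1" using assms by (intro ln_le_minus_one) auto
  also have "y / y0 - 1 = (y - y0) / y0" using assms by (simp add: field_simps)
  finally show ?thesis using assms by (simp add: ln_div)
qed

lemma ln_lower_bound:
  fixes u :: real
  assumes "u \<ge> 0"
  shows "u / (1 + u) \<le> ln (1 + u)"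
proof -
  have "ln (1 / (1 + u)) \<le> 1 / (1 + u) - 1" using assms by (intro ln_le_minus_one) auto
  moreover have "ln (1 / (1 + u)) = - ln (1 + u)" using assms by (simp add: ln_div)
  moreover have "1 / (1 + u) - 1 = - (u / (1 + u))" using assms by (simp add: field_simps)
  ultimately show ?thesis by linarith
qed

lemma integrable_exp_bound:
  fixes f :: "real \<Rightarrow> real"
  assumes cont: "continuous_on {0..} f" and a: "a > 0"
    and bd: "\<And>s. s \<ge> 0 \<Longrightarrow> \<bar>f s\<bar> \<le> C * exp (- a * s)"
  shows "f integrable_on {0..}"
proof (rule measurable_bounded_by_integrable_imp_integrable)
  show "f \<in> borel_measurable (lebesgue_on {0..})"
    by (rule continuous_imp_measurable_on_sets_lebesgue[OF cont]) simp
  show "(\<lambda>s. C * exp (- a * s)) integrable_on {0..}"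
    using integrable_on_exp_minus_to_infinity[OF a, of 0] by (rule integrable_on_mult_right)
  show "norm (f x) \<le> C * exp (- a * x)" if "x \<in> {0..}" for x using bd that by simp
qed simp

lemma s_exp_bound:
  fixes s a :: real
  assumes "a > 0" "s \<ge> 0"
  shows "s * exp (- a * s) \<le> (2 / a) * exp (- (a/2) * s)"
proof -
  have "(a / 2) * s \<le> exp ((a / 2) * s)" using exp_ge_add_one_self[of "(a / 2) * s"] by linarith
  hence "s \<le> (2/a) * exp ((a/2) * s)" using assms by (simp add: field_simps)
  hence "s * exp (- (a/2) * s) \<le> (2/a) * exp ((a/2) * s) * exp (- (a/2) * s)"
    by (intro mult_right_mono) auto
  also have "\<dots> = 2 / a" by (simp add: mult.assoc flip: exp_add)
  finally have "s * exp (- (a/2) * s) \<le> 2 / a" .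
  hence "s * exp (- (a/2) * s) * exp (- (a/2) * s) \<le> (2/a) * exp (- (a/2) * s)"
    by (intro mult_right_mono) auto
  also have "s * exp (- (a/2) * s) * exp (- (a/2) * s) = s * exp (- a * s)"
    by (simp add: mult.assoc flip: exp_add)
  finally show ?thesis .
qed

lemma one_plus_div_pos: "(r::real) > 0 \<Longrightarrow> s \<ge> 0 \<Longrightarrow> 0 < 1 + s / r"
  by (simp add: add_pos_nonneg)

definition F :: "real \<Rightarrow> real \<Rightarrow> real \<Rightarrow> real" where
  "F r p s = s * exp (- r * s) * (1 + s / r) powr p"

lemma F_nonneg: "r > 0 \<Longrightarrow> s \<ge> 0 \<Longrightarrow> F r p s \<ge> 0"
  unfolding F_def by simp

lemma F_cont: "r > 0 \<Longrightarrow> continuous_on {0..} (F r p)"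
  unfolding F_def by (intro continuous_intros) (auto, smt (verit) divide_nonneg_pos)

lemma powr_bound:
  fixes r p s :: real
  assumes r: "r > 0" and s: "s \<ge> 0"
  shows "(1 + s / r) powr p \<le> exp (max p 0 * ln (1 + 2 * max p 0 / r\<^sup>2)) * exp (r * s / 2)"
proof (cases "p \<le> 0")
  case True
  have "(1 + s / r) powr p \<le> 1 powr p" using True r s by (intro powr_mono2') auto
  hence "(1 + s / r) powr p \<le> 1" by simp
  also have "1 \<le> exp (max p 0 * ln (1 + 2 * max p 0 / r\<^sup>2)) * exp (r * s / 2)"
    using True r s by simp
  finally show ?thesis .
next
  case False
  define U where "U = 2 * p / r\<^sup>2"
  have U: "U > 0" using False r by (simp add: U_def)
  have "ln (1 + s / r) \<le> ln (1 + U) + ((1 + s/r) - (1 + U)) / (1 + U)"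
    using U r s by (intro ln_concave_bound) (auto simp: one_plus_div_pos)
  also have "\<dots> \<le> ln (1 + U) + (s / r) / (1 + U)"
    using U r s by (intro add_left_mono divide_right_mono) auto
  finally have "p * ln (1 + s / r) \<le> p * (ln (1 + U) + (s / r) / (1 + U))"
    using False by (intro mult_left_mono) auto
  also have "\<dots> = p * ln (1 + U) + s * (p / (r * (1 + U)))" by (simp add: field_simps)
  also have d: "r * (1 + U) > 0" using U r by simp
  have "r / 2 * (r * (1 + U)) = r\<^sup>2 / 2 + p" using r by (simp add: U_def field_simps power2_eq_square)
  hence "p \<le> r / 2 * (r * (1 + U))" using r by simp
  hence "p / (r * (1 + U)) \<le> r / 2" by (simp add: pos_divide_le_eq[OF d])
  hence "s * (p / (r * (1 + U))) \<le> s * (r / 2)" using s by (intro mult_left_mono) auto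
  finally have *: "p * ln (1 + s / r) \<le> p * ln (1 + U) + r * s / 2" by (simp add: mult.commute)
  have "(1 + s / r) powr p = exp (p * ln (1 + s / r))"
    using r s one_plus_div_pos[OF r s] by (simp add: powr_def)
  also have "\<dots> \<le> exp (p * ln (1 + U) + r * s / 2)" using * by simp
  also have "\<dots> = exp (max p 0 * ln (1 + 2 * max p 0 / r\<^sup>2)) * exp (r * s / 2)"
    using False by (simp add: U_def exp_add)
  finally show ?thesis .
qed

lemma F_integrable:
  assumes r: "r > 0"
  shows "F r p integrable_on {0..}"
proof -
  define K where "K = exp (max p 0 * ln (1 + 2 * max p 0 / r\<^sup>2))"
  show ?thesis
  proof (rule integrable_exp_bound[OF F_cont[OF r], where a="r / 4" and C="K * (4 / r)"])
    show "r / 4 > 0" using r by simp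
    fix s :: real assume s: "s \<ge> 0"
    have "\<bar>F r p s\<bar> = s * exp (- r * s) * (1 + s / r) powr p"
      using F_nonneg[OF r s] by (simp add: F_def)
    also have "\<dots> \<le> s * exp (- r * s) * (K * exp (r * s / 2))"
      using powr_bound[OF r s, of p] s by (intro mult_left_mono) (auto simp: K_def)
    also have "\<dots> = K * (s * exp (- (r/2) * s))"
      by (simp add: algebra_simps flip: exp_add)
    also have "\<dots> \<le> K * ((2 / (r/2)) * exp (- ((r/2)/2) * s))"
      using r s by (intro mult_left_mono s_exp_bound) (auto simp: K_def)
    also have "\<dots> = K * (4 / r) * exp (- (r / 4) * s)" by simp
    finally show "\<bar>F r p s\<bar> \<le> K * (4 / r) * exp (- (r / 4) * s)" .
  qed
qed

lemma image_scale_atLeast: assumes "(r::real) > 0" shows "(\<lambda>t. r * t) ` {0..} = {0..}"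
proof (intro equalityI subsetI)
  fix y :: real assume "y \<in> {0..}"
  thus "y \<in> (\<lambda>t. r * t) ` {0..}" using assms by (intro image_eqI[of _ _ "y / r"]) auto
qed (use assms in auto)

lemma alpha_F:
  assumes lam: "lam > 0"
  shows "alpha_bar n lam = min 1 (inverse (integral {0..} (F (sqrt lam) (n - 1))))"
proof -
  define r where "r = sqrt lam"
  have r: "r > 0" using lam by (simp add: r_def)
  have rr: "r * r = lam" using lam by (simp add: r_def)
  have absF: "F r (n - 1) absolutely_integrable_on {0..}"
    by (rule nonnegative_absolutely_integrable_1[OF F_integrable[OF r]]) (use F_nonneg[OF r] in auto)
  have cv: "(\<lambda>x. \<bar>r\<bar> * F r (n - 1) (r * x)) absolutely_integrable_on {0..} \<and>
           integral {0..} (\<lambda>x. \<bar>r\<bar> * F r (n - 1) (r * x)) = integral {0..} (F r (n - 1))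
     \<longleftrightarrow> F r (n - 1) absolutely_integrable_on ((\<lambda>t. r * t) ` {0..}) \<and>
           integral ((\<lambda>t. r * t) ` {0..}) (F r (n - 1)) = integral {0..} (F r (n - 1))"
    by (rule has_absolute_integral_change_of_variables_1') (use r in \<open>auto intro!: derivative_eq_intros simp: inj_on_def\<close>)
  have eq: "(\<lambda>x. \<bar>r\<bar> * F r (n - 1) (r * x)) = (\<lambda>t. lam * (t * exp (- lam * t) * (1 + t) powr (n - 1)))"
  proof
    fix t :: real
    have "\<bar>r\<bar> * F r (n - 1) (r * t) = (r * r) * (t * exp (- (r * r) * t) * (1 + t) powr (n - 1))"
      using r by (simp add: F_def algebra_simps)
    thus "\<bar>r\<bar> * F r (n - 1) (r * t) = lam * (t * exp (- lam * t) * (1 + t) powr (n - 1))"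
      by (simp add: rr)
  qed
  have "integral {0..} (\<lambda>t. lam * (t * exp (- lam * t) * (1 + t) powr (n - 1))) = integral {0..} (F r (n - 1))"
    using cv absF image_scale_atLeast[OF r] unfolding eq by simp
  hence "lam * integral {0..} (\<lambda>t. t * exp (- lam * t) * (1 + t) powr (n - 1)) = integral {0..} (F r (n - 1))"
    by simp
  thus ?thesis unfolding alpha_bar_def r_def by simp
qed

lemma dom_bound:
  fixes r s \<beta> :: real
  assumes b: "\<beta> > 0" and r: "r \<ge> 1" and s: "s \<ge> 0"
  shows "F r (r * r + \<beta> * r - 1) s \<le> 4 * exp ((2 * \<beta> + 1) * (2 * \<beta> + 1)) * exp (- (1 / 4) * s)"
proof -
  define S where "S = 2 * \<beta> + 1"
  define p where "p = r * r + \<beta> * r - 1"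
  have r0: "r > 0" using r by simp
  have S0: "S > 0" using b by (simp add: S_def)
  have rS: "r + S > 0" using r0 S0 by simp
  have rr: "r * r \<ge> 1" using mult_mono[of 1 r 1 r] r by simp
  have br: "\<beta> * r \<ge> \<beta>" using mult_left_mono[of 1 r \<beta>] b r by simp
  have "\<beta> * r > 0" using b r0 by simp
  hence p0: "p \<ge> 0" using rr unfolding p_def by linarith
  have l1: "ln (1 + s / r) \<le> ln (1 + S / r) + ((1 + s / r) - (1 + S / r)) / (1 + S / r)"
    using r0 s S0 by (intro ln_concave_bound) (auto simp: one_plus_div_pos)
  have l1': "((1 + s / r) - (1 + S / r)) / (1 + S / r) = (s - S) / (r + S)"
  proof -
    have "(1 + s / r) - (1 + S / r) = (s - S) / r" by (simp add: diff_divide_distrib)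
    moreover have "1 + S / r = (r + S) / r" using r0 by (simp add: field_simps)
    ultimately show ?thesis using r0 rS by simp
  qed
  have l2: "ln (1 + S / r) \<le> S / r" using S0 r0 by (intro ln_add_one_self_le_self) simp
  have "p * ln (1 + s / r) \<le> p * (S / r + (s - S) / (r + S))"
    using l1 l1' l2 p0 by (intro mult_left_mono) auto
  also have "p * (S / r + (s - S) / (r + S)) = (p * S * S) / (r * (r + S)) + p * s / (r + S)"
  proof -
    have "S / r + (s - S) / (r + S) = (S * S + s * r) / (r * (r + S))"
      using r0 rS by (simp add: field_simps)
    also have "\<dots> = (S * S) / (r * (r + S)) + s / (r + S)"
      using r0 rS by (simp add: add_divide_distrib)
    finally show ?thesis by (simp add: distrib_left)
  qed
  also have "(p * S * S) / (r * (r + S)) \<le> S * S"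
  proof -
    have "p \<le> r * (r + S)" using b r0 by (simp add: p_def S_def algebra_simps)
    hence "p * (S * S) \<le> r * (r + S) * (S * S)" by (intro mult_right_mono) auto
    thus ?thesis using r0 rS by (simp add: pos_divide_le_eq mult.assoc mult.commute mult.left_commute)
  qed
  also have "p * s / (r + S) \<le> (r - 1 / 2) * s"
  proof -
    have "p \<le> (r - 1 / 2) * (r + S)" using br r0 by (simp add: p_def S_def algebra_simps)
    hence "p * s \<le> (r - 1 / 2) * (r + S) * s" using s by (intro mult_right_mono) auto
    thus ?thesis using rS by (simp add: pos_divide_le_eq mult.assoc mult.commute mult.left_commute)
  qed
  finally have E: "- r * s + p * ln (1 + s / r) \<le> S * S - s / 2" by (simp add: algebra_simps)
  have "F r p s = s * exp (- r * s + p * ln (1 + s / r))"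
    using one_plus_div_pos[OF r0 s] by (simp add: F_def powr_def exp_add[symmetric] mult.assoc)
  also have "\<dots> \<le> s * exp (S * S - s / 2)" using E s by (intro mult_left_mono) auto
  also have "\<dots> = exp (S * S) * (s * exp (- (1 / 2) * s))"
    by (simp add: algebra_simps flip: exp_add)
  also have "\<dots> \<le> exp (S * S) * ((2 / (1 / 2)) * exp (- ((1 / 2) / 2) * s))"
    using s by (intro mult_left_mono s_exp_bound) auto
  also have "\<dots> = 4 * exp (S * S) * exp (- (1 / 4) * s)" by simp
  finally show ?thesis by (simp add: S_def p_def)
qed

lemma integral_lower:
  fixes f :: "real \<Rightarrow> real"
  assumes f: "f integrable_on S" and nn: "\<And>x. x \<in> S \<Longrightarrow> f x \<ge> 0"
    and sub: "{a..b} \<subseteq> S" and ab: "a \<le> b" and lo: "\<And>x. x \<in> {a..b} \<Longrightarrow> f x \<ge> k"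
  shows "k * (b - a) \<le> integral S f"
proof -
  have fi: "f integrable_on {a..b}" by (rule integrable_on_subinterval[OF f sub])
  have "k * (b - a) = integral {a..b} (\<lambda>_. k)" using ab by simp
  also have "\<dots> \<le> integral {a..b} f" by (intro integral_le fi) (auto intro: lo)
  also have "\<dots> \<le> integral S f" by (intro integral_subset_le sub fi f) (use nn in auto)
  finally show ?thesis .
qed

lemma K_gt_1:
  fixes \<beta> :: real
  assumes b: "\<beta> > 0"
    and gi: "(\<lambda>s. s * exp (\<beta> * s - s * s / 2)) integrable_on {0..}"
  shows "integral {0..} (\<lambda>s. s * exp (\<beta> * s - s * s / 2)) > 1"
proof -
  define q where "q = (\<lambda>s::real. exp (\<beta> * s - s * s / 2))"
  define A where "A = 2 * \<beta> + 2 + \<bar>ln \<beta>\<bar>"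
  have A0: "A \<ge> 1" using b by (simp add: A_def)
  have ftc: "((\<lambda>s. (s - \<beta>) * q s) has_integral (- q A - (- q 0))) {0..A}"
  proof (rule fundamental_theorem_of_calculus)
    show "0 \<le> A" using A0 by simp
    fix x assume "x \<in> {0..A}"
    show "((\<lambda>s. - q s) has_vector_derivative (x - \<beta>) * q x) (at x within {0..A})"
      unfolding q_def has_real_derivative_iff_has_vector_derivative[symmetric]
      by (auto intro!: derivative_eq_intros simp: algebra_simps)
  qed
  have q0: "q 0 = 1" by (simp add: q_def)
  have qc: "continuous_on {0..A} q" unfolding q_def by (intro continuous_intros) auto
  have qi: "q integrable_on {0..A}" by (rule integrable_continuous_interval[OF qc])
  have "((\<lambda>s. (s - \<beta>) * q s + \<beta> * q s) has_integral (1 - q A + \<beta> * integral {0..A} q)) {0..A}"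
    using has_integral_add[OF ftc has_integral_mult_right[OF integrable_integral[OF qi], of \<beta>]] q0
    by simp
  moreover have "(\<lambda>s. (s - \<beta>) * q s + \<beta> * q s) = (\<lambda>s. s * exp (\<beta> * s - s * s / 2))"
    by (auto simp: q_def algebra_simps)
  ultimately have gA: "((\<lambda>s. s * exp (\<beta> * s - s * s / 2)) has_integral (1 - q A + \<beta> * integral {0..A} q)) {0..A}"
    by simp
  have qlow: "exp (- 1 / 2) * (1 - 0) \<le> integral {0..A} q"
  proof (rule integral_lower[OF qi])
    show "\<And>x. x \<in> {0..A} \<Longrightarrow> q x \<ge> 0" by (simp add: q_def)
    show "{0..1} \<subseteq> {0..A}" using A0 by auto
    fix x :: real assume x: "x \<in> {0..1}"
    have "x * x \<le> 1" using x mult_mono[of x 1 x 1] by auto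
    moreover have "\<beta> * x \<ge> 0" using b x by simp
    ultimately have "- 1 / 2 \<le> \<beta> * x - x * x / 2" by simp
    thus "exp (- 1 / 2) \<le> q x" by (simp add: q_def)
  qed simp
  have qA: "q A \<le> exp (- 2) * \<beta>"
  proof -
    have "\<beta> * A - A * A / 2 = A * (- 1 - \<bar>ln \<beta>\<bar> / 2)" by (simp add: A_def algebra_simps)
    also have "\<dots> \<le> A * (- 1)" using A0 by (intro mult_left_mono) auto
    also have "\<dots> \<le> - 2 + ln \<beta>" using b unfolding A_def by (smt (verit))
    finally have "q A \<le> exp (- 2 + ln \<beta>)" by (simp add: q_def)
    also have "\<dots> = exp (- 2) * \<beta>" using b by (simp add: exp_diff exp_minus divide_inverse mult.commute)
    finally show ?thesis .
  qed
  have e: "exp (- 2) < exp (- 1 / (2::real))" by simp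
  have "1 < 1 - q A + \<beta> * integral {0..A} q"
  proof -
    have "q A < exp (- 1 / 2) * \<beta>" using qA e b by (smt (verit) mult_strict_right_mono)
    moreover have "exp (- 1 / 2) * \<beta> \<le> \<beta> * integral {0..A} q" using qlow b by (simp add: mult.commute)
    ultimately show ?thesis by simp
  qed
  also have "1 - q A + \<beta> * integral {0..A} q = integral {0..A} (\<lambda>s. s * exp (\<beta> * s - s * s / 2))"
    using gA by (simp add: integral_unique)
  also have "\<dots> \<le> integral {0..} (\<lambda>s. s * exp (\<beta> * s - s * s / 2))"
    using gA gi by (intro integral_subset_le) (auto simp: integrable_on_def)
  finally show ?thesis .
qed

lemma lim_G:
  fixes \<beta> s :: real
  assumes "s > 0"
  shows "((\<lambda>x. F x (x * x + \<beta> * x - 1) s) \<longlongrightarrow> s * exp (\<beta> * s - s * s / 2)) at_top"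
  unfolding F_def using assms by real_asymp

lemma sqrt_at_top: "a > 0 \<Longrightarrow> filterlim (\<lambda>x::real. sqrt (x * a)) at_top at_top"
  by real_asymp

lemma part1:
  fixes a \<beta> :: real
  assumes a: "a > 0" and b: "\<beta> > 0"
  shows "\<exists>L. (\<lambda>m. alpha_bar (real m * a + \<beta> * sqrt (real m * a)) (real m * a)) \<longlonglongrightarrow> L \<and> 0 < L \<and> L < 1"
proof -
  define R where "R = (\<lambda>m::nat. sqrt (real m * a))"
  define k0 where "k0 = nat \<lceil>1 / a\<rceil>"
  have k0: "real k0 * a \<ge> 1"
  proof -
    have "real k0 \<ge> 1 / a" unfolding k0_def by linarith
    thus ?thesis using a by (simp add: field_simps)
  qed
  have R1: "R (k + k0) \<ge> 1" for k
  proof -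
    have "real (k + k0) * a \<ge> real k0 * a" using a by (intro mult_right_mono) auto
    hence "real (k + k0) * a \<ge> 1" using k0 by linarith
    thus ?thesis unfolding R_def by simp
  qed
  have RR: "R m * R m = real m * a" for m unfolding R_def using a by simp
  define f where "f = (\<lambda>k. F (R (k + k0)) (R (k + k0) * R (k + k0) + \<beta> * R (k + k0) - 1))"
  define g where "g = (\<lambda>s::real. s * exp (\<beta> * s - s * s / 2))"
  define h where "h = (\<lambda>s::real. 4 * exp ((2 * \<beta> + 1) * (2 * \<beta> + 1)) * exp (- (1 / 4) * s))"
  have Rlim: "filterlim (\<lambda>k. R (k + k0)) at_top sequentially"
    unfolding R_def
    by (rule filterlim_compose[OF sqrt_at_top[OF a] filterlim_compose[OF filterlim_real_sequentially filterlim_add_const_nat_at_top]])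
  have fi: "f k integrable_on {0..}" for k
    unfolding f_def using R1[of k] by (intro F_integrable) simp
  have hi: "h integrable_on {0..}"
    unfolding h_def by (rule integrable_on_mult_right[OF integrable_on_exp_minus_to_infinity]) simp
  have le: "norm (f k x) \<le> h x" if "x \<in> {0..}" for k x
  proof -
    have x: "x \<ge> 0" using that by simp
    have "f k x \<ge> 0" unfolding f_def using R1[of k] x by (intro F_nonneg) auto
    moreover have "f k x \<le> h x" unfolding f_def h_def by (rule dom_bound[OF b R1 x])
    ultimately show ?thesis by simp
  qed
  have conv: "(\<lambda>k. f k x) \<longlonglongrightarrow> g x" if "x \<in> {0..}" for x
  proof (cases "x = 0")
    case True
    thus ?thesis by (simp add: f_def g_def F_def)
  next
    case False
    hence "x > 0" using that by simp
    from filterlim_compose[OF lim_G[OF this, of \<beta>] Rlim] show ?thesis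
      by (simp add: f_def g_def)
  qed
  note dc = dominated_convergence[of f "{0..}" h g, OF fi hi le conv]
  define K where "K = integral {0..} g"
  have K1: "K > 1" unfolding K_def g_def using K_gt_1[OF b] dc(1) by (simp add: g_def)
  have eq: "alpha_bar (real (k + k0) * a + \<beta> * sqrt (real (k + k0) * a)) (real (k + k0) * a)
      = min 1 (inverse (integral {0..} (f k)))" for k
  proof -
    have pos: "real (k + k0) * a > 0" using R1[of k] RR[of "k + k0"] mult_mono[of 1 "R (k+k0)" 1 "R (k+k0)"] by simp
    show ?thesis
      unfolding alpha_F[OF pos] f_def R_def[symmetric] using RR[of "k + k0"] by (simp add: R_def)
  qed
  have lim1: "(\<lambda>k. min 1 (inverse (integral {0..} (f k)))) \<longlonglongrightarrow> min 1 (inverse K)"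
    using K1 dc(2) unfolding K_def by (intro tendsto_intros) auto
  hence "(\<lambda>k. alpha_bar (real (k + k0) * a + \<beta> * sqrt (real (k + k0) * a)) (real (k + k0) * a)) \<longlonglongrightarrow> inverse K"
  proof -
    have "min 1 (inverse K) = inverse K" using K1 by (simp add: inverse_less_1_iff less_imp_le)
    thus ?thesis using lim1 unfolding eq by simp
  qed
  hence "(\<lambda>m. alpha_bar (real m * a + \<beta> * sqrt (real m * a)) (real m * a)) \<longlonglongrightarrow> inverse K"
    by (rule LIMSEQ_offset)
  moreover have "0 < inverse K" "inverse K < 1" using K1 by (auto simp: inverse_less_1_iff)
  ultimately show ?thesis by blast
qed

lemma ev_nat: "eventually P at_top \<Longrightarrow> eventually (\<lambda>m::nat. P (real m)) sequentially"
  using filterlim_real_sequentially filterlim_iff by blast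

lemma part2_ev1:
  fixes a c \<beta> :: real
  assumes "c > a" "a > 0" "\<beta> > 0"
  shows "\<forall>\<^sub>F x in at_top. x * c - (x * a + \<beta> * sqrt (x * a) - 1) \<ge> 3 * sqrt (x * c)"
  using assms by real_asymp

lemma ev_p_nonneg:
  fixes a \<beta> :: real
  assumes "a > 0" "\<beta> > 0"
  shows "\<forall>\<^sub>F x in at_top. x * a + \<beta> * sqrt (x * a) - 1 \<ge> 0"
  using assms by real_asymp

lemma part3_ev1:
  fixes a c \<beta> d :: real
  assumes "a > 0" "c > 0" "\<beta> > 0" "c * (1 + d) < a"
  shows "\<forall>\<^sub>F x in at_top. x * a + \<beta> * sqrt (x * a) - 1 \<ge> (x * c) * (1 + d)"
  using assms by real_asymp

lemma part2_alpha:
  fixes r p :: real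
  assumes r: "r > 0" and p: "p \<ge> 0" and D: "r * r - p \<ge> 3 * r"
  shows "min 1 (inverse (integral {0..} (F r p))) = 1"
proof -
  define D where "D = r - p / r"
  have D3: "D \<ge> 3"
  proof -
    have "r * r - p = r * D" using r by (simp add: D_def field_simps)
    hence "r * 3 \<le> r * D" using D by (simp add: mult.commute)
    thus ?thesis using r by (simp add: mult_le_cancel_left_pos)
  qed
  have up: "F r p s \<le> (1 / 2) * exp (- 1 * s)" if s: "s \<ge> 0" for s
  proof -
    have "ln (1 + s / r) \<le> s / r" using r s by (intro ln_add_one_self_le_self) simp
    hence "p * ln (1 + s / r) \<le> p * (s / r)" using p by (intro mult_left_mono)
    hence le1: "exp (- r * s + p * ln (1 + s / r)) \<le> exp (- r * s + p * (s / r))" by simp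
    have "F r p s = s * exp (- r * s + p * ln (1 + s / r))"
      using one_plus_div_pos[OF r s] by (simp add: F_def powr_def exp_add[symmetric] mult.assoc)
    also have "\<dots> \<le> s * exp (- r * s + p * (s / r))" using le1 s by (intro mult_left_mono)
    also have "- r * s + p * (s / r) = - D * s" by (simp add: D_def algebra_simps)
    also have "s * exp (- D * s) = (s * exp (- (D - 1) * s)) * exp (- 1 * s)"
      by (simp add: mult.assoc flip: exp_add) (simp add: algebra_simps)
    also have "s * exp (- (D - 1) * s) \<le> 1 / 2"
    proof -
      have "2 * s \<le> (D - 1) * s" using D3 s by (intro mult_right_mono) auto
      also have "\<dots> \<le> exp ((D - 1) * s)" using exp_ge_add_one_self[of "(D - 1) * s"] by linarith
      finally have "2 * s * exp (- (D - 1) * s) \<le> exp ((D - 1) * s) * exp (- (D - 1) * s)"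
        by (intro mult_right_mono) auto
      also have "\<dots> = 1" by (simp flip: exp_add add: algebra_simps)
      finally show ?thesis by simp
    qed
    hence "(s * exp (- (D - 1) * s)) * exp (- 1 * s) \<le> (1 / 2) * exp (- 1 * s)"
      by (intro mult_right_mono) auto
    finally show ?thesis .
  qed
  have ei: "((\<lambda>s::real. exp (- 1 * s)) has_integral 1) {0..}"
    using has_integral_exp_minus_to_infinity[of 1 0] by simp
  have Fi: "F r p integrable_on {0..}" by (rule F_integrable[OF r])
  have ei2: "(\<lambda>s::real. (1 / 2) * exp (- 1 * s)) integrable_on {0..}"
    by (rule integrable_on_mult_right) (use ei in \<open>auto simp: integrable_on_def\<close>)
  have "integral {0..} (F r p) \<le> integral {0..} (\<lambda>s. (1 / 2) * exp (- 1 * s))"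
    using ei2 Fi up by (intro integral_le) auto
  also have "\<dots> = 1 / 2" using ei by (simp add: integral_unique)
  finally have I2: "integral {0..} (F r p) \<le> 1 / 2" .
  have low: "exp (- 2 * r) * (2 - 1) \<le> integral {0..} (F r p)"
  proof (rule integral_lower[OF Fi])
    show "\<And>x. x \<in> {0..} \<Longrightarrow> 0 \<le> F r p x" using F_nonneg[OF r] by auto
    fix s :: real assume s: "s \<in> {1..2}"
    have "1 \<le> (1 + s / r) powr p" using s r p by (intro ge_one_powr_ge_zero) auto
    moreover have "exp (- 2 * r) \<le> exp (- r * s)" using s r by simp
    moreover have "exp (- r * s) \<le> s * exp (- r * s)" using s by simp
    ultimately have "exp (- 2 * r) \<le> s * exp (- r * s)" "1 \<le> (1 + s / r) powr p" by linarith+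
    hence "exp (- 2 * r) * 1 \<le> s * exp (- r * s) * (1 + s / r) powr p"
      using s by (intro mult_mono) auto
    thus "exp (- 2 * r) \<le> F r p s" by (simp add: F_def)
  qed auto
  have ep: "exp (- 2 * r) > 0" by simp
  have low': "exp (- 2 * r) \<le> integral {0..} (F r p)" using low by simp
  have I0: "integral {0..} (F r p) > 0" using low' ep by linarith
  have "inverse (integral {0..} (F r p)) \<ge> 2"
    using I0 I2 by (simp add: field_simps)
  thus ?thesis by simp
qed

lemma part2:
  fixes a c \<beta> :: real
  assumes a: "a > 0" and ca: "c > a" and b: "\<beta> > 0"
  shows "(\<lambda>m. alpha_bar (real m * a + \<beta> * sqrt (real m * a)) (real m * c)) \<longlonglongrightarrow> 1"
proof (rule tendsto_eventually)
  have c: "c > 0" using a ca by simp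
  have ev: "\<forall>\<^sub>F m in sequentially. real m * c - (real m * a + \<beta> * sqrt (real m * a) - 1) \<ge> 3 * sqrt (real m * c)
      \<and> real m * a + \<beta> * sqrt (real m * a) - 1 \<ge> 0 \<and> real m \<ge> 1"
    by (intro eventually_conj ev_nat part2_ev1 ev_p_nonneg ca a b) (simp add: eventually_ge_at_top)
  show "\<forall>\<^sub>F m in sequentially. alpha_bar (real m * a + \<beta> * sqrt (real m * a)) (real m * c) = 1"
  proof (rule eventually_mono[OF ev], elim conjE)
    fix m :: nat
    assume h1: "real m * c - (real m * a + \<beta> * sqrt (real m * a) - 1) \<ge> 3 * sqrt (real m * c)"
      and h2: "real m * a + \<beta> * sqrt (real m * a) - 1 \<ge> 0" and h3: "real m \<ge> 1"
    have lam: "real m * c > 0" using h3 c by simp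
    have rr: "sqrt (real m * c) * sqrt (real m * c) = real m * c" using lam by simp
    show "alpha_bar (real m * a + \<beta> * sqrt (real m * a)) (real m * c) = 1"
      unfolding alpha_F[OF lam]
      by (rule part2_alpha) (use lam h1 h2 rr in auto)
  qed
qed

lemma part3_bound:
  fixes r p d :: real
  assumes r: "r > 0" and d: "d > 0" and p: "p \<ge> r * r * (1 + d)"
  shows "integral {0..} (F r p) \<ge> d * d * (r * r) / 4"
proof -
  have "(d * r / 2) * (d * r - d * r / 2) \<le> integral {0..} (F r p)"
  proof (rule integral_lower[OF F_integrable[OF r]])
    show "\<And>x. x \<in> {0..} \<Longrightarrow> 0 \<le> F r p x" using F_nonneg[OF r] by auto
    show "{d * r / 2..d * r} \<subseteq> {0..}" using d r by auto
    show "d * r / 2 \<le> d * r" using d r by simp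
    fix s :: real assume s: "s \<in> {d * r / 2..d * r}"
    define u where "u = s / r"
    have s0: "s \<ge> 0" using s d r by (auto intro: order_trans[of 0 "d * r / 2"])
    have u0: "u \<ge> 0" using s0 r by (simp add: u_def)
    have ud: "u \<le> d" using s r by (simp add: u_def divide_le_eq mult.commute)
    have "u / (1 + d) \<le> u / (1 + u)" using u0 ud by (intro divide_left_mono) auto
    also have "\<dots> \<le> ln (1 + u)" by (rule ln_lower_bound[OF u0])
    finally have l: "u / (1 + d) \<le> ln (1 + u)" .
    have d1: "1 + d \<noteq> 0" using d by simp
    have "(r * r * (1 + d)) * (u / (1 + d)) = r * r * u" using d1 by simp
    also have "r * r * u = r * s" using r by (simp add: u_def)
    finally have "r * s = (r * r * (1 + d)) * (u / (1 + d))" by simp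
    also have "\<dots> \<le> p * ln (1 + u)"
    proof -
      have "0 \<le> r * r * (1 + d)" using r d by simp
      hence p0: "0 \<le> p" using p by linarith
      show ?thesis using p l u0 d p0 by (intro mult_mono) auto
    qed
    finally have e: "0 \<le> - r * s + p * ln (1 + u)" by simp
    have "F r p s = s * exp (- r * s + p * ln (1 + u))"
      using one_plus_div_pos[OF r s0] by (simp add: F_def u_def powr_def exp_add[symmetric] mult.assoc)
    also have "\<dots> \<ge> s * 1" using e s0 by (intro mult_left_mono) auto
    finally show "d * r / 2 \<le> F r p s" using s by simp
  qed
  thus ?thesis by (simp add: field_simps)
qed

lemma part3:
  fixes a c \<beta> :: real
  assumes a: "a > 0" and c: "c > 0" and ca: "c < a" and b: "\<beta> > 0"
  shows "(\<lambda>m. alpha_bar (real m * a + \<beta> * sqrt (real m * a)) (real m * c)) \<longlonglongrightarrow> 0"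
proof -
  define d where "d = (a - c) / (2 * c)"
  have d: "d > 0" using ca c by (simp add: d_def)
  have cd: "c * (1 + d) < a" using ca c by (simp add: d_def field_simps)
  define C where "C = 4 / (d * d * c)"
  have ev: "\<forall>\<^sub>F m in sequentially. real m * a + \<beta> * sqrt (real m * a) - 1 \<ge> (real m * c) * (1 + d)
      \<and> real m \<ge> 1"
    by (intro eventually_conj ev_nat part3_ev1 a b c cd) (simp add: eventually_ge_at_top)
  have bounds: "\<forall>\<^sub>F m in sequentially. 0 \<le> alpha_bar (real m * a + \<beta> * sqrt (real m * a)) (real m * c)
     \<and> alpha_bar (real m * a + \<beta> * sqrt (real m * a)) (real m * c) \<le> C / real m"
  proof (rule eventually_mono[OF ev], elim conjE)
    fix m :: nat
    assume h1: "real m * a + \<beta> * sqrt (real m * a) - 1 \<ge> (real m * c) * (1 + d)" and h3: "real m \<ge> 1"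
    have lam: "real m * c > 0" using h3 c by simp
    define r where "r = sqrt (real m * c)"
    have r: "r > 0" using lam by (simp add: r_def)
    have rr: "r * r = real m * c" using lam by (simp add: r_def)
    define I where "I = integral {0..} (F r (real m * a + \<beta> * sqrt (real m * a) - 1))"
    have I: "I \<ge> d * d * (real m * c) / 4"
      unfolding I_def rr[symmetric] by (rule part3_bound[OF r d]) (use h1 rr in simp)
    have pos: "d * d * (real m * c) / 4 > 0" using d lam by simp
    have al: "alpha_bar (real m * a + \<beta> * sqrt (real m * a)) (real m * c) = min 1 (inverse I)"
      unfolding alpha_F[OF lam] I_def r_def by simp
    have "inverse I \<le> inverse (d * d * (real m * c) / 4)"
      using I pos by (intro le_imp_inverse_le) auto
    also have "\<dots> = C / real m" using d c h3 by (simp add: C_def field_simps)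
    finally have "inverse I \<le> C / real m" .
    moreover have "inverse I > 0" using I pos by simp
    ultimately show "0 \<le> alpha_bar (real m * a + \<beta> * sqrt (real m * a)) (real m * c)
     \<and> alpha_bar (real m * a + \<beta> * sqrt (real m * a)) (real m * c) \<le> C / real m"
      unfolding al by auto
  qed
  show ?thesis
    by (rule tendsto_sandwich[OF eventually_mono[OF bounds] eventually_mono[OF bounds] tendsto_const lim_const_over_n]) auto
qed

theorem corollary1:
  fixes \<Omega> :: "'a set" and \<Lambda>0 :: "'a \<Rightarrow> real" and \<beta> :: real and wkey :: 'a
  assumes "finite \<Omega>"
    and "\<And>w. w \<in> \<Omega> \<Longrightarrow> \<Lambda>0 w > 0"
    and "\<beta> > 0"
    and "wkey \<in> \<Omega>"
  defines "n \<equiv> (\<lambda>m::nat. real m * \<Lambda>0 wkey + \<beta> * sqrt (real m * \<Lambda>0 wkey))"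
  shows "(\<exists>L. (\<lambda>m. alpha_bar (n m) (real m * \<Lambda>0 wkey)) \<longlonglongrightarrow> L \<and> 0 < L \<and> L < 1)
    \<and> (\<forall>w\<in>\<Omega>. \<Lambda>0 w > \<Lambda>0 wkey \<longrightarrow> (\<lambda>m. alpha_bar (n m) (real m * \<Lambda>0 w)) \<longlonglongrightarrow> 1)
    \<and> (\<forall>w\<in>\<Omega>. \<Lambda>0 w < \<Lambda>0 wkey \<longrightarrow> (\<lambda>m. alpha_bar (n m) (real m * \<Lambda>0 w)) \<longlonglongrightarrow> 0)"
proof -
  have a: "\<Lambda>0 wkey > 0" using assms(2,4) by blast
  have 1: "\<exists>L. (\<lambda>m. alpha_bar (n m) (real m * \<Lambda>0 wkey)) \<longlonglongrightarrow> L \<and> 0 < L \<and> L < 1"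
    unfolding n_def using part1[OF a assms(3)] by simp
  have 2: "\<forall>w\<in>\<Omega>. \<Lambda>0 w > \<Lambda>0 wkey \<longrightarrow> (\<lambda>m. alpha_bar (n m) (real m * \<Lambda>0 w)) \<longlonglongrightarrow> 1"
    unfolding n_def using part2[OF a _ assms(3)] by blast
  have 3: "\<forall>w\<in>\<Omega>. \<Lambda>0 w < \<Lambda>0 wkey \<longrightarrow> (\<lambda>m. alpha_bar (n m) (real m * \<Lambda>0 w)) \<longlonglongrightarrow> 0"
    unfolding n_def using part3[OF a _ _ assms(3)] assms(2) by blast
  from 1 2 3 show ?thesis by blast
qed

end
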